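(* In a system of quads, the facial walk of a quad cannot contain the same edge twice, whether with the same or with opposite orientations.
   Context: A system of quads is a combinatorial surface (graph cellularly embedded via a rotation system in an orientable surface of negative Euler characteristic) whose graph is bipartite, whose non-perforated faces (quads) are all quadrilaterals, and whose vertices all have degree at least 8. *)

theory Defs
  imports Main
begin

text \<open>Combinatorial surfaces encoded as combinatorial maps on a finite set of darts D:
  alpha is the fixed-point-free involution exchanging the two darts of an edge,
  sigma is the rotation system (successor of a dart around its origin vertex),
  phi = sigma o alpha is the face permutation (facial walks).
  Vertices, edges, faces are the orbits of sigma, alpha, phi respectively.
  Pf is the set of darts lying in perforated faces (a union of phi-orbits).\<close>

definition orb :: "('d \<Rightarrow> 'd) \<Rightarrow> 'd \<Rightarrow> 'd set" where
  "orb f d = {(f ^^ n) d | n. True}"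

definition face_perm :: "('d \<Rightarrow> 'd) \<Rightarrow> ('d \<Rightarrow> 'd) \<Rightarrow> 'd \<Rightarrow> 'd" where
  "face_perm \<alpha> \<sigma> = \<sigma> \<circ> \<alpha>"

definition comb_map :: "'d set \<Rightarrow> ('d \<Rightarrow> 'd) \<Rightarrow> ('d \<Rightarrow> 'd) \<Rightarrow> bool" where
  "comb_map D \<alpha> \<sigma> \<longleftrightarrow> finite D \<and> D \<noteq> {} \<and>
     bij_betw \<sigma> D D \<and> bij_betw \<alpha> D D \<and>
     (\<forall>d\<in>D. \<alpha> (\<alpha> d) = d \<and> \<alpha> d \<noteq> d)"

definition comb_connected :: "'d set \<Rightarrow> ('d \<Rightarrow> 'd) \<Rightarrow> ('d \<Rightarrow> 'd) \<Rightarrow> bool" where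
  "comb_connected D \<alpha> \<sigma> \<longleftrightarrow>
     (\<forall>d\<in>D. \<forall>e\<in>D. (d, e) \<in> (({(x, \<sigma> x) | x. x \<in> D} \<union> {(x, \<alpha> x) | x. x \<in> D})\<^sup>*))"

definition n_vertices :: "'d set \<Rightarrow> ('d \<Rightarrow> 'd) \<Rightarrow> nat" where
  "n_vertices D \<sigma> = card ((\<lambda>d. orb \<sigma> d) ` D)"

definition n_edges :: "'d set \<Rightarrow> ('d \<Rightarrow> 'd) \<Rightarrow> nat" where
  "n_edges D \<alpha> = card ((\<lambda>d. orb \<alpha> d) ` D)"

definition n_faces_np :: "'d set \<Rightarrow> 'd set \<Rightarrow> ('d \<Rightarrow> 'd) \<Rightarrow> ('d \<Rightarrow> 'd) \<Rightarrow> nat" where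
  "n_faces_np D Pf \<alpha> \<sigma> = card ((\<lambda>d. orb (face_perm \<alpha> \<sigma>) d) ` (D - Pf))"

text \<open>Euler characteristic of the surface (perforated faces are removed, i.e. are holes).\<close>
definition euler_char :: "'d set \<Rightarrow> 'd set \<Rightarrow> ('d \<Rightarrow> 'd) \<Rightarrow> ('d \<Rightarrow> 'd) \<Rightarrow> int" where
  "euler_char D Pf \<alpha> \<sigma> =
     int (n_vertices D \<sigma>) - int (n_edges D \<alpha>) + int (n_faces_np D Pf \<alpha> \<sigma>)"

definition comb_surface :: "'d set \<Rightarrow> 'd set \<Rightarrow> ('d \<Rightarrow> 'd) \<Rightarrow> ('d \<Rightarrow> 'd) \<Rightarrow> bool" where
  "comb_surface D Pf \<alpha> \<sigma> \<longleftrightarrow> comb_map D \<alpha> \<sigma> \<and> comb_connected D \<alpha> \<sigma> \<and>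
     Pf \<subseteq> D \<and> (\<forall>d\<in>D. face_perm \<alpha> \<sigma> d \<in> Pf \<longleftrightarrow> d \<in> Pf)"

definition bipartite_map :: "'d set \<Rightarrow> ('d \<Rightarrow> 'd) \<Rightarrow> ('d \<Rightarrow> 'd) \<Rightarrow> bool" where
  "bipartite_map D \<alpha> \<sigma> \<longleftrightarrow>
     (\<exists>c :: 'd \<Rightarrow> bool. \<forall>d\<in>D. c (\<sigma> d) = c d \<and> c (\<alpha> d) \<noteq> c d)"

definition system_of_quads :: "'d set \<Rightarrow> 'd set \<Rightarrow> ('d \<Rightarrow> 'd) \<Rightarrow> ('d \<Rightarrow> 'd) \<Rightarrow> bool" where
  "system_of_quads D Pf \<alpha> \<sigma> \<longleftrightarrow>
     comb_surface D Pf \<alpha> \<sigma> \<and> euler_char D Pf \<alpha> \<sigma> < 0 \<and>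
     bipartite_map D \<alpha> \<sigma> \<and>
     (\<forall>d\<in>D - Pf. card (orb (face_perm \<alpha> \<sigma>) d) = 4) \<and>
     (\<forall>d\<in>D. card (orb \<sigma> d) \<ge> 8)"

end

theory Submission
  imports Defs
begin

lemma orb_fix: "s x = x \<Longrightarrow> orb s x = {x}"
proof -
  assume h: "s x = x"
  have "(s ^^ n) x = x" for n by (induction n) (simp_all add: h)
  thus ?thesis unfolding orb_def by auto
qed

lemma period_exists:
  assumes fin: "finite D" and bij: "bij_betw f D D" and d: "d \<in> D"
  shows "\<exists>n>0. (f ^^ n) d = d"
proof -
  have img: "(\<lambda>k. (f ^^ k) d) ` UNIV \<subseteq> D"
    using bij_betw_funpow[OF bij] d by (auto simp: bij_betw_def)
  have "\<not> inj (\<lambda>k. (f ^^ k) d)"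
  proof
    assume "inj (\<lambda>k. (f ^^ k) d)"
    hence "infinite ((\<lambda>k. (f ^^ k) d) ` (UNIV::nat set))"
      using finite_imageD by blast
    with img fin show False using finite_subset by blast
  qed
  then obtain a b where ab: "a \<noteq> b" "(f ^^ a) d = (f ^^ b) d" unfolding inj_def by blast
  { fix a b assume "a < b" "(f ^^ a) d = (f ^^ b) d"
    have bb: "(f ^^ b) d = (f ^^ (a + (b - a))) d" using \<open>a < b\<close> by simp
    hence e: "(f ^^ a) d = (f ^^ a) ((f ^^ (b - a)) d)"
      using \<open>(f ^^ a) d = (f ^^ b) d\<close> by (simp only: funpow_add comp_apply)
    have inj: "inj_on (f ^^ a) D" using bij_betw_funpow[OF bij] by (auto simp: bij_betw_def)
    have "(f ^^ (b - a)) d \<in> D" using bij_betw_funpow[OF bij] d by (auto simp: bij_betw_def)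
    hence "(f ^^ (b - a)) d = d" using inj_onD[OF inj e[symmetric]] d by simp
    hence "\<exists>n>0. (f ^^ n) d = d" using \<open>a < b\<close> by (intro exI[of _ "b-a"]) auto }
  with ab show ?thesis by (metis linorder_neqE_nat)
qed

lemma orbit_card4:
  assumes fin: "finite D" and bij: "bij_betw f D D" and d: "d \<in> D"
    and c4: "card (orb f d) = 4"
  shows "(f ^^ 4) d = d \<and> inj_on (\<lambda>k. (f ^^ k) d) {0..<4}"
proof -
  define p where "p = (LEAST n. 0 < n \<and> (f ^^ n) d = d)"
  have pp: "0 < p \<and> (f ^^ p) d = d"
    unfolding p_def using period_exists[OF assms(1-3)] by (rule LeastI_ex)
  have pmin: "\<And>m. 0 < m \<Longrightarrow> m < p \<Longrightarrow> (f ^^ m) d \<noteq> d"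
    unfolding p_def using not_less_Least by blast
  have inj: "inj_on (\<lambda>k. (f ^^ k) d) {0..<p}"
    by (rule inj_on_funpow_least) (use pp pmin in auto)
  have "orb f d = (\<lambda>k. (f ^^ k) d) ` {0..<p}"
  proof
    show "orb f d \<subseteq> (\<lambda>k. (f ^^ k) d) ` {0..<p}"
    proof
      fix x assume "x \<in> orb f d"
      then obtain n where "x = (f ^^ n) d" unfolding orb_def by auto
      hence "x = (f ^^ (n mod p)) d" using funpow_mod_eq[where f=f and n=p and x=d and m=n] pp by simp
      moreover have "n mod p < p" using pp by simp
      ultimately show "x \<in> (\<lambda>k. (f ^^ k) d) ` {0..<p}" by auto
    qed
  qed (auto simp: orb_def)
  hence "card (orb f d) = p" using card_image[OF inj] by simp
  hence "p = 4" using c4 by simp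
  thus ?thesis using pp inj by simp
qed

theorem lemma30:
  fixes D Pf :: "'d set" and \<alpha> \<sigma> :: "'d \<Rightarrow> 'd" and d :: 'd
  assumes "system_of_quads D Pf \<alpha> \<sigma>"
    and "d \<in> D" and "d \<notin> Pf"
    and "i < 4" and "j < 4" and "i \<noteq> j"
  shows "(face_perm \<alpha> \<sigma> ^^ i) d \<noteq> (face_perm \<alpha> \<sigma> ^^ j) d
       \<and> (face_perm \<alpha> \<sigma> ^^ i) d \<noteq> \<alpha> ((face_perm \<alpha> \<sigma> ^^ j) d)"
proof -
  define f where "f = face_perm \<alpha> \<sigma>"
  have cm: "comb_map D \<alpha> \<sigma>" using assms(1)
    unfolding system_of_quads_def comb_surface_def by auto
  have fin: "finite D" and bs: "bij_betw \<sigma> D D" and ba: "bij_betw \<alpha> D D"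
    and inv: "\<And>x. x \<in> D \<Longrightarrow> \<alpha> (\<alpha> x) = x"
    using cm unfolding comb_map_def by auto
  have bf: "bij_betw f D D" unfolding f_def face_perm_def
    using bij_betw_trans[OF ba bs] .
  have aD: "\<And>x. x \<in> D \<Longrightarrow> \<alpha> x \<in> D" using ba by (auto simp: bij_betw_def)
  have fa: "\<And>a b x. (f ^^ (a+b)) x = (f^^a) ((f^^b) x)" by (simp add: funpow_add)
  have fD: "\<And>x k. x \<in> D \<Longrightarrow> (f ^^ k) x \<in> D"
    using bij_betw_funpow[OF bf] by (auto simp: bij_betw_def)
  have deg: "\<And>x. x \<in> D \<Longrightarrow> card (orb \<sigma> x) \<ge> 8" using assms(1)
    unfolding system_of_quads_def by auto
  have c4: "card (orb f d) = 4" using assms(1-3)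
    unfolding system_of_quads_def f_def by auto
  have "bipartite_map D \<alpha> \<sigma>" using assms(1) unfolding system_of_quads_def by simp
  then obtain c :: "'d \<Rightarrow> bool" where col0: "\<forall>x\<in>D. c (\<sigma> x) = c x \<and> c (\<alpha> x) \<noteq> c x"
    unfolding bipartite_map_def by (elim exE)
  have col: "\<And>x. x \<in> D \<Longrightarrow> c (\<sigma> x) = c x \<and> c (\<alpha> x) \<noteq> c x" using col0 by blast
  from orbit_card4[OF fin bf assms(2) c4]
  have p4: "(f ^^ 4) d = d" and injd: "inj_on (\<lambda>k. (f ^^ k) d) {0..<4}" by auto
  have part1: "(f ^^ i) d \<noteq> (f ^^ j) d"
    using inj_onD[OF injd, of i j] assms(4-6) by auto
  have fcol: "c ((f ^^ k) d) = (if even k then c d else \<not> c d)" for k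
  proof (induction k)
    case (Suc k)
    have x: "(f ^^ k) d \<in> D" using fD assms(2) by blast
    have "c ((f ^^ Suc k) d) = c (\<sigma> (\<alpha> ((f ^^ k) d)))" by (simp add: f_def face_perm_def)
    also have "\<dots> = c (\<alpha> ((f ^^ k) d))" using col aD x by blast
    also have "\<dots> = (\<not> c ((f ^^ k) d))" using col x by blast
    finally show ?case using Suc by auto
  qed simp
  have key: "False" if y: "y \<in> D" and y4: "(f ^^ 4) y = y"
    and k: "k = 1 \<or> k = 3" and e: "(f ^^ k) y = \<alpha> y" for y k
  proof -
    have "\<exists>x\<in>D. \<sigma> x = x"
    proof (cases "k = 1")
      case True
      hence "\<sigma> (\<alpha> y) = \<alpha> y" using e by (simp add: f_def face_perm_def)
      thus ?thesis using aD y by blast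
    next
      case False
      hence k3: "k = 3" using k by simp
      have "y = f ((f ^^ 3) y)" using y4 by (simp add: numeral_eq_Suc)
      also have "\<dots> = \<sigma> (\<alpha> (\<alpha> y))" using e k3 by (simp add: f_def face_perm_def)
      also have "\<dots> = \<sigma> y" using inv y by simp
      finally show ?thesis using y by metis
    qed
    then obtain x where "x \<in> D" "\<sigma> x = x" by blast
    thus False using deg[of x] orb_fix[of \<sigma> x] by simp
  qed
  have part2: "(f ^^ i) d \<noteq> \<alpha> ((f ^^ j) d)"
  proof
    assume eq: "(f ^^ i) d = \<alpha> ((f ^^ j) d)"
    have jD: "(f ^^ j) d \<in> D" using fD assms(2) by blast
    have "c ((f ^^ i) d) \<noteq> c ((f ^^ j) d)" using eq col jD by simp
    hence par: "even i \<noteq> even j" using fcol[of i] fcol[of j] by (auto split: if_splits)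
    have per: "(f ^^ 4) ((f ^^ m) d) = (f ^^ m) d" for m
    proof -
      have "(f ^^ 4) ((f ^^ m) d) = (f ^^ m) ((f ^^ 4) d)"
        by (simp only: fa[symmetric] add.commute)
      thus ?thesis using p4 by simp
    qed
    consider "i = j + 1" | "i = j + 3" | "j = i + 1" | "j = i + 3"
    proof -
      have "i \<in> {0,1,2,3}" "j \<in> {0,1,2,3}" using assms(4,5) by auto
      thus ?thesis using that par assms(6) by auto
    qed
    thus False
    proof cases
      case 1
      have "(f ^^ 1) ((f ^^ j) d) = (f ^^ i) d"
        by (subst fa[symmetric]) (simp add: 1)
      hence "(f ^^ 1) ((f ^^ j) d) = \<alpha> ((f ^^ j) d)" using eq by simp
      thus False using key[OF jD per[of j]] by blast
    next
      case 2
      have "(f ^^ 3) ((f ^^ j) d) = (f ^^ i) d"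
        by (subst fa[symmetric]) (simp add: 2 add.commute)
      hence "(f ^^ 3) ((f ^^ j) d) = \<alpha> ((f ^^ j) d)" using eq by simp
      thus False using key[OF jD per[of j]] by blast
    next
      case 3
      have iD: "(f ^^ i) d \<in> D" using fD assms(2) by blast
      have "(f ^^ 1) ((f ^^ i) d) = (f ^^ j) d"
        by (subst fa[symmetric]) (simp add: 3)
      hence "(f ^^ 1) ((f ^^ i) d) = \<alpha> ((f ^^ i) d)" using eq inv jD by simp
      thus False using key[OF iD per[of i]] by blast
    next
      case 4
      have iD: "(f ^^ i) d \<in> D" using fD assms(2) by blast
      have "(f ^^ 3) ((f ^^ i) d) = (f ^^ j) d"
        by (subst fa[symmetric]) (simp add: 4 add.commute)
      hence "(f ^^ 3) ((f ^^ i) d) = \<alpha> ((f ^^ i) d)" using eq inv jD by simp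
      thus False using key[OF iD per[of i]] by blast
    qed
  qed
  show ?thesis using part1 part2 unfolding f_def by blast
qed

end
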